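(* Let $X,Y$ be real Banach spaces. Assume that $X^*$ has octahedral norm and that there exists $f\in S_Y$ such that $n(Y,f)=1$. Let $H$ be a closed subspace of $L(X,Y)$ such that $X^*\otimes Y\subseteq H$. Then $H$ has octahedral norm.
   Context: The norm of a Banach space $Z$ is octahedral if for every finite-dimensional subspace $E$ of $Z$ and every $\varepsilon>0$ there is $y\in S_Z$ with $\|x+\lambda y\|\ge(1-\varepsilon)(\|x\|+|\lambda|)$ for all $x\in E$ and scalars $\lambda$. For a Banach space $Z$ and $u\in S_Z$, let $D(Z,u)=\{\varphi\in B_{Z^*}:\varphi(u)=1\}$ and let $n(Z,u)$ be the largest $k\ge0$ such that $k\|z\|\le\sup\{|\varphi(z)|:\varphi\in D(Z,u)\}$ for all $z\in Z$. $L(X,Y)$ is the space of bounded linear operators with operator norm; $X^*\otimes Y$ is the space of finite-rank operators spanned by $x\mapsto x^*(x)y$. *)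

theory Defs
  imports "HOL-Analysis.Analysis"
begin

definition octahedral :: "'a::real_normed_vector set \<Rightarrow> bool" where
  "octahedral Z \<longleftrightarrow>
     (\<forall>E \<epsilon>. subspace E \<and> E \<subseteq> Z \<and> (\<exists>B. finite B \<and> E = span B) \<and> \<epsilon> > 0 \<longrightarrow>
        (\<exists>y\<in>Z. norm y = 1 \<and>
           (\<forall>x\<in>E. \<forall>t::real. norm (x + t *\<^sub>R y) \<ge> (1 - \<epsilon>) * (norm x + \<bar>t\<bar>))))"

definition supp_functionals :: "'b::real_normed_vector \<Rightarrow> ('b \<Rightarrow>\<^sub>L real) set" where
  "supp_functionals u = {\<phi>. norm \<phi> \<le> 1 \<and> blinfun_apply \<phi> u = 1}"

definition numidx :: "'b::real_normed_vector \<Rightarrow> real" where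
  "numidx u = Sup {k. k \<ge> 0 \<and>
      (\<forall>z. k * norm z \<le> Sup ((\<lambda>\<phi>. \<bar>blinfun_apply \<phi> z\<bar>) ` supp_functionals u))}"

definition rank_one :: "('a::real_normed_vector \<Rightarrow>\<^sub>L real) \<Rightarrow> 'b::real_normed_vector \<Rightarrow> 'a \<Rightarrow>\<^sub>L 'b" where
  "rank_one xs y = blinfun_scaleR_left y o\<^sub>L xs"

end

theory Submission
  imports Defs
begin

lemma compact_coeff:
  fixes B :: "'v::real_normed_vector set" and S :: "'v \<Rightarrow> real set"
  assumes "finite B" "\<And>b. b \<in> B \<Longrightarrow> compact (S b)"
  shows "compact {(\<Sum>b\<in>B. c b *\<^sub>R b) | c. \<forall>b\<in>B. c b \<in> S b}"
  using assms
proof (induction B rule: finite_induct)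
  case empty
  have "{(\<Sum>b\<in>{}. c b *\<^sub>R b) | c. \<forall>b\<in>({}::'v set). c b \<in> S b} = {0::'v}" by auto
  then show ?case by simp
next
  case (insert a B)
  let ?K = "{(\<Sum>b\<in>B. c b *\<^sub>R b) | c. \<forall>b\<in>B. c b \<in> S b}"
  have cK: "compact ?K" using insert by auto
  have cA: "compact ((\<lambda>t. t *\<^sub>R a) ` S a)"
    by (rule compact_continuous_image) (auto intro!: continuous_intros insert.prems)
  have eq: "{(\<Sum>b\<in>insert a B. c b *\<^sub>R b) | c. \<forall>b\<in>insert a B. c b \<in> S b}
     = {x + y | x y. x \<in> (\<lambda>t. t *\<^sub>R a) ` S a \<and> y \<in> ?K}"
  proof (intro set_eqI iffI)
    fix z assume "z \<in> {(\<Sum>b\<in>insert a B. c b *\<^sub>R b) | c. \<forall>b\<in>insert a B. c b \<in> S b}"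
    then obtain c where z: "z = (\<Sum>b\<in>insert a B. c b *\<^sub>R b)" and c: "\<forall>b\<in>insert a B. c b \<in> S b" by blast
    have "z = c a *\<^sub>R a + (\<Sum>b\<in>B. c b *\<^sub>R b)" using z insert.hyps by simp
    then show "z \<in> {x + y | x y. x \<in> (\<lambda>t. t *\<^sub>R a) ` S a \<and> y \<in> ?K}" using c by blast
  next
    fix z assume "z \<in> {x + y | x y. x \<in> (\<lambda>t. t *\<^sub>R a) ` S a \<and> y \<in> ?K}"
    then obtain t c where z: "z = t *\<^sub>R a + (\<Sum>b\<in>B. c b *\<^sub>R b)" and t: "t \<in> S a" and c: "\<forall>b\<in>B. c b \<in> S b" by blast
    define c' where "c' = c(a := t)"
    have "(\<Sum>b\<in>B. c' b *\<^sub>R b) = (\<Sum>b\<in>B. c b *\<^sub>R b)"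
      using insert.hyps by (intro sum.cong) (auto simp: c'_def)
    then have "z = (\<Sum>b\<in>insert a B. c' b *\<^sub>R b)" using z insert.hyps by (simp add: c'_def)
    moreover have "\<forall>b\<in>insert a B. c' b \<in> S b" using t c by (auto simp: c'_def)
    ultimately show "z \<in> {(\<Sum>b\<in>insert a B. c b *\<^sub>R b) | c. \<forall>b\<in>insert a B. c b \<in> S b}" by blast
  qed
  show ?case unfolding eq by (rule compact_sums[OF cA cK])
qed

lemma finite_cover_span:
  fixes B :: "'v::real_normed_vector set" and P :: "'p \<Rightarrow> 'v \<Rightarrow> bool"
  assumes "finite B"
    and opn: "\<And>\<phi>. \<phi> \<in> D \<Longrightarrow> open {T. P \<phi> T}"
    and scl: "\<And>\<phi> T c. c \<noteq> 0 \<Longrightarrow> P \<phi> T \<Longrightarrow> P \<phi> (c *\<^sub>R T)"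
    and cov: "\<And>T. T \<noteq> 0 \<Longrightarrow> \<exists>\<phi>\<in>D. P \<phi> T"
  shows "\<exists>\<Phi>\<subseteq>D. finite \<Phi> \<and> (\<forall>T\<in>span B. T \<noteq> 0 \<longrightarrow> (\<exists>\<phi>\<in>\<Phi>. P \<phi> T))"
proof -
  obtain B' where B': "B' \<subseteq> B" "independent B'" "B \<subseteq> span B'"
    using maximal_independent_subset by blast
  have fB': "finite B'" using B'(1) assms(1) finite_subset by blast
  have spB: "span B \<subseteq> span B'"
    using B'(3) span_mono span_span by blast
  define Sf where "Sf = (\<lambda>(b0::'v) (s::real) (b::'v). if b = b0 then {s} else {-1..1::real})"
  define K where "K = (\<Union>b0\<in>B'. \<Union>s\<in>{1,-1}. {(\<Sum>b\<in>B'. c b *\<^sub>R b) | c. \<forall>b\<in>B'. c b \<in> Sf b0 s b})"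
  have cK: "compact K" unfolding K_def
    by (intro compact_UN finite.intros fB' ballI compact_coeff) (auto simp: Sf_def)
  have K0: "T \<noteq> 0" if "T \<in> K" for T
  proof
    assume T0: "T = 0"
    from that obtain b0 s c where b0: "b0 \<in> B'" and s: "s \<in> {1,-1}" and
      T: "T = (\<Sum>b\<in>B'. c b *\<^sub>R b)" and c: "\<forall>b\<in>B'. c b \<in> Sf b0 s b"
      unfolding K_def by blast
    have "c b0 = s" using c b0 by (auto simp: Sf_def)
    then have "c b0 \<noteq> 0" using s by auto
    then have "dependent B'" using dependent_finite[OF fB'] b0 T T0 by blast
    then show False using B'(2) by blast
  qed
  have Kc: "K \<subseteq> (\<Union>\<phi>\<in>D. {T. P \<phi> T})" using cov K0 by blast
  have "\<exists>\<Phi>. \<Phi> \<subseteq> D \<and> finite \<Phi> \<and> K \<subseteq> (\<Union>\<phi>\<in>\<Phi>. {T. P \<phi> T})"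
    by (rule compactE_image[OF cK, of D "\<lambda>\<phi>. {T. P \<phi> T}"]) (use opn Kc in blast)+
  then obtain \<Phi> where \<Phi>: "\<Phi> \<subseteq> D" "finite \<Phi>" "K \<subseteq> (\<Union>\<phi>\<in>\<Phi>. {T. P \<phi> T})"
    by blast
  have "\<exists>\<phi>\<in>\<Phi>. P \<phi> T" if T: "T \<in> span B" "T \<noteq> 0" for T
  proof -
    have "T \<in> span B'" using T spB by blast
    then obtain c where Tc: "T = (\<Sum>b\<in>B'. c b *\<^sub>R b)" using span_finite[OF fB'] by blast
    have ne: "B' \<noteq> {}" using Tc T(2) by auto
    define M where "M = Max ((\<lambda>b. \<bar>c b\<bar>) ` B')"
    obtain b0 where b0: "b0 \<in> B'" "\<bar>c b0\<bar> = M"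
      using Max_in[of "(\<lambda>b. \<bar>c b\<bar>) ` B'"] fB' ne unfolding M_def by (metis (no_types, lifting) finite_imageI image_iff image_is_empty)
    have Mge: "\<bar>c b\<bar> \<le> M" if "b \<in> B'" for b
      unfolding M_def using fB' that by (intro Max_ge) auto
    have Mpos: "M > 0"
    proof (rule ccontr)
      assume "\<not> M > 0"
      then have "\<forall>b\<in>B'. c b = 0" using Mge by (meson abs_le_zero_iff not_le order_trans)
      then have "T = 0" using Tc by simp
      then show False using T(2) by simp
    qed
    define c' where "c' = (\<lambda>b. c b / M)"
    have "(1/M) *\<^sub>R T = (\<Sum>b\<in>B'. c' b *\<^sub>R b)"
      unfolding Tc c'_def by (simp add: scaleR_sum_right divide_inverse_commute)
    moreover have "\<forall>b\<in>B'. c' b \<in> Sf b0 (c b0 / M) b"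
      using Mge Mpos by (auto simp: Sf_def c'_def abs_le_iff field_simps) (smt (verit))
    moreover have "c b0 / M \<in> {1,-1}" using b0 Mpos by (auto simp: abs_if split: if_splits)
    ultimately have "(1/M) *\<^sub>R T \<in> K" unfolding K_def using b0(1) by blast
    then obtain \<phi> where "\<phi> \<in> \<Phi>" "P \<phi> ((1/M) *\<^sub>R T)" using \<Phi>(3) by blast
    moreover have "M *\<^sub>R ((1/M) *\<^sub>R T) = T" using Mpos by simp
    ultimately show ?thesis using scl[of M \<phi> "(1/M) *\<^sub>R T"] Mpos by auto
  qed
  then show ?thesis using \<Phi> by blast
qed

lemma numidx_approx:
  fixes f :: "'b::real_normed_vector"
  assumes nf: "norm f = 1" and ni: "numidx f = 1" and z: "z \<noteq> 0" and d: "\<delta> > 0"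
  shows "\<exists>\<phi>\<in>supp_functionals f. (1-\<delta>) * norm z < \<bar>blinfun_apply \<phi> z\<bar>"
proof (rule ccontr)
  assume neg: "\<not> ?thesis"
  define D where "D = supp_functionals f"
  define M where "M = (\<lambda>z. Sup ((\<lambda>\<phi>. \<bar>blinfun_apply \<phi> z\<bar>) ` D))"
  define S where "S = {k. k \<ge> 0 \<and> (\<forall>z. k * norm z \<le> M z)}"
  have S1: "Sup S = 1" using ni unfolding numidx_def S_def M_def D_def by simp
  show False
  proof (cases "D = {}")
    case True
    define c where "c = Sup ({}::real set)"
    have Mc: "M z' = c" for z' unfolding M_def c_def True by simp
    show False
    proof (cases "c \<ge> 0")
      case True
      have "S = {0}"
      proof (intro set_eqI iffI)
        fix k assume k: "k \<in> S"
        show "k \<in> {0}"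
        proof (rule ccontr)
          assume "k \<notin> {0}"
          with k have kp: "k > 0" unfolding S_def by auto
          have "\<forall>z. k * norm z \<le> M z" using k unfolding S_def by simp
          then have "k * norm (((c+1)/k) *\<^sub>R f) \<le> c" using Mc by metis
          moreover have "k * norm (((c+1)/k) *\<^sub>R f) = c + 1" using kp True nf by simp
          ultimately show False by simp
        qed
      next
        fix k assume "k \<in> {0::real}" then show "k \<in> S" using True Mc unfolding S_def by simp
      qed
      then show False using S1 by simp
    next
      case False
      have "S = {}" using False Mc unfolding S_def by (auto intro: exI[of _ 0])
      then show False using S1 False unfolding c_def by simp
    qed
  next
    case False
    then obtain \<phi>0 where \<phi>0: "\<phi>0 \<in> D" by blast
    have bdd: "bdd_above ((\<lambda>\<phi>. \<bar>blinfun_apply \<phi> z'\<bar>) ` D)" for z'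
    proof (rule bdd_aboveI2)
      fix \<phi> assume "\<phi> \<in> D"
      then have "norm \<phi> \<le> 1" unfolding D_def supp_functionals_def by simp
      then show "\<bar>blinfun_apply \<phi> z'\<bar> \<le> norm z'"
        using norm_blinfun[of \<phi> z'] mult_right_mono[OF \<open>norm \<phi> \<le> 1\<close> norm_ge_zero[of z']] by simp
    qed
    have M0: "M z' \<ge> 0" for z'
      unfolding M_def using cSup_upper[OF imageI[OF \<phi>0] bdd[of z']] by (meson abs_ge_zero order_trans)
    have 0: "0 \<in> S" unfolding S_def using M0 by simp
    have Mz: "M z \<le> (1-\<delta>) * norm z"
      unfolding M_def using neg False unfolding D_def by (auto intro!: cSup_least simp: not_less)
    have "k \<le> 1 - \<delta>" if "k \<in> S" for k
    proof -
      have "k * norm z \<le> (1-\<delta>) * norm z" using that Mz unfolding S_def by (metis (no_types, lifting) mem_Collect_eq order_trans)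
      then show ?thesis using z by simp
    qed
    then have "Sup S \<le> 1 - \<delta>" using 0 by (intro cSup_least) auto
    then show False using S1 d by simp
  qed
qed

lemma onorm_approx:
  fixes T :: "'a::real_normed_vector \<Rightarrow>\<^sub>L 'b::real_normed_vector"
  assumes "T \<noteq> 0" "\<delta> > 0" "\<delta> < 1"
  shows "\<exists>x. (1-\<delta>) * norm T * norm x < norm (blinfun_apply T x)"
proof (rule ccontr)
  assume "\<not> ?thesis"
  then have "norm T \<le> (1-\<delta>) * norm T"
    using assms by (intro norm_blinfun_bound) (auto simp: not_less mult.commute)
  moreover have "norm T > 0" using assms by simp
  ultimately show False using assms by (smt (verit) mult_le_cancel_right1)
qed

theorem mainTheorem5:
  fixes H :: "('a::banach \<Rightarrow>\<^sub>L 'b::banach) set"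
    and f :: 'b
  assumes "octahedral (UNIV :: ('a \<Rightarrow>\<^sub>L real) set)"
    and "norm f = 1"
    and "numidx f = 1"
    and "subspace H" and "closed H"
    and "span {rank_one xs y | xs y. True} \<subseteq> H"
  shows "octahedral H"
  unfolding octahedral_def
proof (intro allI impI, elim conjE exE)
  fix E :: "('a \<Rightarrow>\<^sub>L 'b) set" and \<epsilon> :: real and B0
  assume sE: "subspace E" and EH: "E \<subseteq> H" and fB0: "finite B0" and EB: "E = span B0" and ep: "\<epsilon> > 0"
  define \<delta> where "\<delta> = min (\<epsilon>/3) (1/2)"
  have dp: "\<delta> > 0" and d1: "\<delta> < 1" and d3: "3 * \<delta> \<le> \<epsilon>" using ep by (auto simp: \<delta>_def)
  define D where "D = supp_functionals f"
  have nf: "norm f = 1" using assms(2) .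
  have f0: "f \<noteq> 0" using nf by auto
  obtain \<phi>0 where \<phi>0: "\<phi>0 \<in> D" using numidx_approx[OF nf assms(3) f0 dp] unfolding D_def by blast
  have Dn: "norm \<phi> \<le> 1" "blinfun_apply \<phi> f = 1" if "\<phi> \<in> D" for \<phi>
    using that unfolding D_def supp_functionals_def by auto
  define P where "P = (\<lambda>(\<phi>::'b \<Rightarrow>\<^sub>L real) (T::'a \<Rightarrow>\<^sub>L 'b). (1-\<delta>)^2 * norm T < norm (\<phi> o\<^sub>L T))"
  have cov: "\<exists>\<phi>\<in>D. P \<phi> T" if T0: "T \<noteq> 0" for T
  proof -
    obtain x where x: "(1-\<delta>) * norm T * norm x < norm (blinfun_apply T x)"
      using onorm_approx[OF T0 dp d1] by blast
    have x0: "x \<noteq> 0" using x by auto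
    have "0 \<le> (1-\<delta>) * norm T * norm x" using d1 by simp
    then have Tx0: "blinfun_apply T x \<noteq> 0" using x by auto
    obtain \<phi> where \<phi>: "\<phi> \<in> D" "(1-\<delta>) * norm (blinfun_apply T x) < \<bar>blinfun_apply \<phi> (blinfun_apply T x)\<bar>"
      using numidx_approx[OF nf assms(3) Tx0 dp] unfolding D_def by blast
    have "\<bar>blinfun_apply \<phi> (blinfun_apply T x)\<bar> \<le> norm (\<phi> o\<^sub>L T) * norm x"
      using norm_blinfun[of "\<phi> o\<^sub>L T" x] by simp
    moreover have "(1-\<delta>)^2 * norm T * norm x < (1-\<delta>) * norm (blinfun_apply T x)"
      using x d1 by (simp add: power2_eq_square mult.assoc)
    ultimately have "(1-\<delta>)^2 * norm T * norm x < norm (\<phi> o\<^sub>L T) * norm x" using \<phi>(2) by linarith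
    then have "(1-\<delta>)^2 * norm T < norm (\<phi> o\<^sub>L T)" using x0 by simp
    then show ?thesis using \<phi>(1) unfolding P_def by blast
  qed
  have opn: "open {T. P \<phi> T}" for \<phi>
    unfolding P_def by (intro open_Collect_less continuous_intros)
  have scl: "P \<phi> (c *\<^sub>R T)" if "c \<noteq> 0" "P \<phi> T" for \<phi> T c
  proof -
    have "\<phi> o\<^sub>L (c *\<^sub>R T) = c *\<^sub>R (\<phi> o\<^sub>L T)" by (rule bounded_bilinear.scaleR_right[OF bounded_bilinear_blinfun_compose])
    then show ?thesis using that unfolding P_def by simp
  qed
  obtain \<Phi> where \<Phi>: "\<Phi> \<subseteq> D" "finite \<Phi>" "\<forall>T\<in>span B0. T \<noteq> 0 \<longrightarrow> (\<exists>\<phi>\<in>\<Phi>. P \<phi> T)"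
    using finite_cover_span[of B0 D P, OF fB0 opn scl cov] by blast
  define G where "G = (\<lambda>p. fst p o\<^sub>L snd p) ` (\<Phi> \<times> B0)"
  define F where "F = span G"
  have fG: "finite G" unfolding G_def using \<Phi>(2) fB0 by simp
  obtain ys where ys: "norm ys = 1"
    "\<forall>x\<in>F. \<forall>t::real. norm (x + t *\<^sub>R ys) \<ge> (1 - \<delta>) * (norm x + \<bar>t\<bar>)"
  proof -
    have pre: "subspace F \<and> F \<subseteq> UNIV \<and> (\<exists>B. finite B \<and> F = span B) \<and> \<delta> > 0"
      using fG dp unfolding F_def by auto
    show ?thesis using assms(1)[unfolded octahedral_def, rule_format, OF pre] that by blast
  qed
  define y where "y = rank_one ys f"
  have yH: "y \<in> H" using assms(6) span_base[of y "{rank_one xs y | xs y. True}"] unfolding y_def by blast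
  have \<phi>y: "\<phi> o\<^sub>L y = ys" if "\<phi> \<in> D" for \<phi>
    by (rule blinfun_eqI) (simp add: y_def rank_one_def blinfun.scaleR_right Dn[OF that])
  have ny: "norm y = 1"
  proof (rule antisym)
    show "norm y \<le> 1"
    proof (rule norm_blinfun_bound)
      fix x show "norm (blinfun_apply y x) \<le> 1 * norm x"
        using norm_blinfun[of ys x] by (simp add: y_def rank_one_def nf ys(1))
    qed simp
    have "1 = norm (\<phi>0 o\<^sub>L y)" using \<phi>y[OF \<phi>0] ys(1) by simp
    also have "\<dots> \<le> norm \<phi>0 * norm y" by (rule norm_blinfun_compose)
    also have "\<dots> \<le> norm y" using Dn(1)[OF \<phi>0] by (simp add: mult_left_le_one_le)
    finally show "1 \<le> norm y" .
  qed
  have a3: "(1-\<delta>)^3 \<ge> 1 - \<epsilon>"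
  proof -
    have "(1-\<delta>)^3 - (1 - 3*\<delta>) = \<delta>^2 * (3 - \<delta>)" by (simp add: power3_eq_cube power2_eq_square algebra_simps)
    moreover have "\<delta>^2 * (3 - \<delta>) \<ge> 0" using d1 by simp
    ultimately show ?thesis using d3 by linarith
  qed
  show "\<exists>y\<in>H. norm y = 1 \<and> (\<forall>x\<in>E. \<forall>t::real. norm (x + t *\<^sub>R y) \<ge> (1 - \<epsilon>) * (norm x + \<bar>t\<bar>))"
  proof (intro bexI conjI ballI allI)
    show "y \<in> H" by (rule yH)
    show "norm y = 1" by (rule ny)
    fix T t assume TE: "T \<in> E"
    show "norm (T + t *\<^sub>R y) \<ge> (1 - \<epsilon>) * (norm T + \<bar>t\<bar>)"
    proof (cases "T = 0")
      case True
      have "0 \<le> \<epsilon> * \<bar>t\<bar>" using ep by simp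
      then show ?thesis using True ny by (simp add: left_diff_distrib)
    next
      case False
      then obtain \<phi> where \<phi>: "\<phi> \<in> \<Phi>" "P \<phi> T" using \<Phi>(3) TE EB by blast
      have \<phi>D: "\<phi> \<in> D" using \<phi>(1) \<Phi>(1) by blast
      have lin: "linear (\<lambda>T. \<phi> o\<^sub>L T)"
        by (rule bounded_linear.linear) (rule bounded_bilinear.bounded_linear_right[OF bounded_bilinear_blinfun_compose])
      have "\<phi> o\<^sub>L T \<in> (\<lambda>T. \<phi> o\<^sub>L T) ` span B0" using TE EB by blast
      also have "\<dots> = span ((\<lambda>T. \<phi> o\<^sub>L T) ` B0)" by (rule span_linear_image[OF lin, symmetric])
      also have "\<dots> \<subseteq> F" unfolding F_def G_def
        by (rule span_mono) (use \<phi>(1) in force)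
      finally have \<phi>TF: "\<phi> o\<^sub>L T \<in> F" .
      have eq: "\<phi> o\<^sub>L (T + t *\<^sub>R y) = (\<phi> o\<^sub>L T) + t *\<^sub>R ys"
        using \<phi>y[OF \<phi>D] bounded_bilinear.add_right[OF bounded_bilinear_blinfun_compose, of \<phi> T "t *\<^sub>R y"]
          bounded_bilinear.scaleR_right[OF bounded_bilinear_blinfun_compose, of \<phi> t y] by simp
      have "norm (\<phi> o\<^sub>L (T + t *\<^sub>R y)) \<le> norm (T + t *\<^sub>R y)"
        using norm_blinfun_compose[of \<phi> "T + t *\<^sub>R y"] mult_right_mono[OF Dn(1)[OF \<phi>D] norm_ge_zero[of "T + t *\<^sub>R y"]]
        by linarith
      moreover have "norm (\<phi> o\<^sub>L (T + t *\<^sub>R y)) \<ge> (1 - \<delta>) * (norm (\<phi> o\<^sub>L T) + \<bar>t\<bar>)"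
        using ys(2) \<phi>TF eq by simp
      moreover have "(1 - \<delta>) * (norm (\<phi> o\<^sub>L T) + \<bar>t\<bar>) \<ge> (1 - \<delta>) * ((1-\<delta>)^2 * norm T + \<bar>t\<bar>)"
        using \<phi>(2) d1 unfolding P_def by (intro mult_left_mono) auto
      moreover have "(1 - \<delta>) * ((1-\<delta>)^2 * norm T + \<bar>t\<bar>) \<ge> (1 - \<epsilon>) * (norm T + \<bar>t\<bar>)"
      proof -
        have "(1-\<delta>) \<ge> (1-\<delta>)^3" using dp d1 by (simp add: power_le_one power3_eq_cube mult_le_one)
        then have h: "(1-\<delta>) \<ge> 1 - \<epsilon>" using a3 by linarith
        have "(1 - \<delta>) * ((1-\<delta>)^2 * norm T + \<bar>t\<bar>) = (1-\<delta>)^3 * norm T + (1-\<delta>) * \<bar>t\<bar>"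
          by (simp add: power3_eq_cube power2_eq_square algebra_simps)
        moreover have "(1-\<delta>)^3 * norm T \<ge> (1-\<epsilon>) * norm T" using a3 by (intro mult_right_mono) auto
        moreover have "(1-\<delta>) * \<bar>t\<bar> \<ge> (1-\<epsilon>) * \<bar>t\<bar>" using h by (intro mult_right_mono) auto
        ultimately show ?thesis by (simp add: algebra_simps)
      qed
      ultimately show ?thesis by linarith
    qed
  qed
qed

end
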